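(* Let $n$ be a positive integer and let $f$ be the function on $\mathbb{F}_{2^n}$ defined by $f(0)=1$, $f(1)=0$ and $f(x)=x^{-1}$ for $x\notin\{0,1\}$ (i.e. $f=Inv\circ(0,1)$). For $a,b\in\mathbb{F}_{2^n}$ let $\nabla_f(a,b)$ denote the number of $x\in\mathbb{F}_{2^n}$ such that $f(x+a+b)+f(x+a)+f(x+b)+f(x)=0$. Then \[ \nabla_f(a,b)= \begin{cases} 2^n, &\text{if } ab(a+b)=0,\\ 8, &\text{if } a\ne b \text{ and } a^3+a+1=b^3+b+1=0,\\ 4, &\text{if } ab(a+b)\ne 0 \text{ and } [\,a,b\in\mathbb{F}_4^* \text{ or } (a,b)\in S\,],\\ 0, &\text{otherwise,} \end{cases} \] where \[ S=\{(a,b)\in\mathbb{F}_{2^n}^*\times\mathbb{F}_{2^n}^* : a^2+b^2+ab\in\{1,\,ab(a+b)\}\}\setminus\{(a,b)\in\mathbb{F}_{2^3}^*\times\mathbb{F}_{2^3}^* : a^3+a+1=b^3+b+1=0\}. \]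
   Context: $Inv(x)=x^{2^n-2}$ is the multiplicative inverse map on $\mathbb{F}_{2^n}$ (with $Inv(0)=0$), and $(0,1)$ denotes the transposition of $\mathbb{F}_{2^n}$ swapping $0$ and $1$; $Inv\circ(0,1)$ means $x\mapsto Inv((0,1)(x))$. $\mathbb{F}_4^*$ and $\mathbb{F}_{2^3}^*$ denote the nonzero elements of the subfields of order $4$ and $8$ of $\mathbb{F}_{2^n}$ (when these subfields exist; conditions referring to them are void otherwise). $\mathbb{F}_{2^n}^*=\mathbb{F}_{2^n}\setminus\{0\}$. *)

theory Defs
  imports Main
begin

text \<open>The field F_{2^n} is rendered as a finite field type 'a with card UNIV = 2^n.\<close>

definition inv_swap :: "'a::field \<Rightarrow> 'a" where
  "inv_swap x = (if x = 0 then 1 else if x = 1 then 0 else inverse x)"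

definition nabla :: "('a::{field,finite} \<Rightarrow> 'a) \<Rightarrow> 'a \<Rightarrow> 'a \<Rightarrow> nat" where
  "nabla f a b = card {x. f (x + a + b) + f (x + a) + f (x + b) + f x = 0}"

text \<open>Nonzero elements of the subfield of order 2^k of F_{2^n}; empty if it does not exist (k not dividing n).\<close>
definition subfield_star :: "nat \<Rightarrow> nat \<Rightarrow> 'a::field set" where
  "subfield_star n k = {x. k dvd n \<and> x \<noteq> 0 \<and> x ^ (2 ^ k) = x}"

definition S_set :: "nat \<Rightarrow> ('a::field \<times> 'a) set" where
  "S_set n = {(a, b). a \<noteq> 0 \<and> b \<noteq> 0 \<and> (a^2 + b^2 + a*b = 1 \<or> a^2 + b^2 + a*b = a*b*(a+b))}
     - {(a, b). a \<in> subfield_star n 3 \<and> b \<in> subfield_star n 3 \<and> a^3 + a + 1 = 0 \<and> b^3 + b + 1 = 0}"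

end

theory Submission imports Defs begin

lemma c2_self: assumes c2: "(1::'a::field)+1=0" shows "x + x = (0::'a)"
proof -
  have "x+x = (1+1)*x" by (simp add: distrib_right)
  then show ?thesis using c2 by simp
qed

lemma c2_self2: assumes c2: "(1::'a::field)+1=0" shows "x + (x + y) = (y::'a)"
  by (simp add: add.assoc[symmetric] c2_self[OF c2])

lemma c2_neg: assumes c2: "(1::'a::field)+1=0" shows "- x = (x::'a)"
  using c2_self[OF c2, of x] by (simp add: neg_eq_iff_add_eq_0)

lemma c2_eq: assumes c2: "(1::'a::field)+1=0" shows "(x + y = 0) = (x = (y::'a))"
  by (metis add.commute add_diff_cancel c2_neg c2 diff_0 c2_self)

lemma char2:
  assumes "card (UNIV::'a::{field,finite} set) = 2^n" "n > 0"
  shows "(1::'a) + 1 = 0"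
proof -
  have "(\<Sum>x\<in>UNIV. x + (1::'a)) = (\<Sum>x\<in>UNIV. x)"
    by (rule sum.reindex_bij_witness[of _ "\<lambda>x. x - 1" "\<lambda>x. x + 1"]) auto
  then have "of_nat (card (UNIV::'a set)) = (0::'a)"
    by (simp add: sum.distrib)
  then have "(2::'a)^n = 0" using assms(1) by simp
  then have "(2::'a) = 0" by simp
  then show ?thesis by simp
qed

lemma fermat:
  assumes "(x::'a::{field,finite}) \<noteq> 0"
  shows "x ^ (card (UNIV::'a set) - 1) = 1"
proof -
  let ?U = "UNIV - {0::'a}"
  have "(\<Prod>y\<in>?U. x * y) = (\<Prod>y\<in>?U. y)"
    by (rule prod.reindex_bij_witness[of _ "\<lambda>y. y / x" "\<lambda>y. x * y"]) (use assms in auto)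
  then have "x ^ card ?U * (\<Prod>y\<in>?U. y) = 1 * (\<Prod>y\<in>?U. y)"
    by (simp add: prod.distrib)
  moreover have "(\<Prod>y\<in>?U. y) \<noteq> 0" by simp
  ultimately have "x ^ card ?U = 1" by (metis mult_right_cancel)
  moreover have "card ?U = card (UNIV::'a set) - 1" by (simp add: card_Diff_singleton)
  ultimately show ?thesis by simp
qed

lemma four_pow_mod3: "(4::nat)^k mod 3 = 1"
  by (induction k) (auto simp: mod_mult_right_eq[symmetric] mult_mod_right)

lemma even_n:
  assumes "card (UNIV::'a::{field,finite} set) = 2^n" "n > 0" "(u::'a)^2 + u + 1 = 0"
  shows "2 dvd n"
proof (rule ccontr)
  assume "\<not> 2 dvd n"
  then obtain k where k: "n = 2*k+1" by (metis oddE)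
  have c2: "(1::'a)+1=0" using char2 assms(1,2) .
  have u0: "u \<noteq> 0" using assms(3) by auto
  have u3: "u^3 = 1"
  proof -
    have "u^3 = u * u^2" by (simp add: power_numeral_reduce)
    also have "u^2 = u + 1" using assms(3) c2_eq[OF c2, of "u^2" "u+1"] by (simp add: add.assoc)
    finally have "u^3 = u*u + u" by (simp add: distrib_left)
    also have "u*u = u + 1" using \<open>u^2 = u+1\<close> by (simp add: power2_eq_square)
    finally have "u^3 = u + (u + 1)" by (simp add: add.commute)
    then show ?thesis by (simp only: c2_self2[OF c2])
  qed
  obtain d where d: "(4::nat)^k = 3*d+1" using four_pow_mod3[of k] by (metis mod_div_mult_eq add.commute mult.commute)
  have "card (UNIV::'a set) - 1 = 3*(2*d) + 1" using assms(1) k d by (simp add: power_mult power_add)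
  then have "u ^ (3*(2*d)+1) = 1" using fermat[OF u0] by simp
  moreover have "u ^ (3*(2*d)+1) = u" using u3 by (simp only: power_add power_mult) simp
  ultimately have "u = 1" by simp
  then have "(1::'a) + (1 + 1) = 0" using assms(3) by (simp add: add.assoc)
  then have "(1::'a) = 0" using c2 by (simp only: add_0_right)
  then show False by simp
qed

lemma key:
  assumes c2: "(1::'a::field)+1=0" and a0: "a \<noteq> 0" and b0: "b \<noteq> 0" and ab: "a \<noteq> b"
    and h1: "x \<noteq> 0" "x \<noteq> 1" and h2: "x+a \<noteq> 0" "x+a \<noteq> 1"
    and h3: "x+b \<noteq> 0" "x+b \<noteq> 1" and h4: "x+a+b \<noteq> 0" "x+a+b \<noteq> (1::'a)"
  shows "inv_swap (x+a+b) + inv_swap (x+a) + inv_swap (x+b) + inv_swap x \<noteq> 0"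
proof
  assume H: "inv_swap (x+a+b) + inv_swap (x+a) + inv_swap (x+b) + inv_swap x = 0"
  have e1: "inverse x + inverse (x+a) = a / (x*(x+a))"
  proof -
    have "inverse x + inverse (x+a) = (x + (x+a)) / (x*(x+a))" using h1 h2 by (simp add: field_simps)
    then show ?thesis by (simp only: c2_self2[OF c2])
  qed
  have e2: "inverse (x+b) + inverse (x+a+b) = a / ((x+b)*(x+a+b))"
  proof -
    have "inverse (x+b) + inverse (x+a+b) = ((x+b) + (x+a+b)) / ((x+b)*(x+a+b))" using h3 h4 by (simp add: field_simps)
    moreover have "(x+b) + (x+a+b) = a"
    proof -
      have "(x+b) + (x+a+b) = x + (x + (b + (b + a)))" by (simp add: ac_simps)
      then show ?thesis by (simp only: c2_self2[OF c2])
    qed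
    ultimately show ?thesis by simp
  qed
  have "(inverse x + inverse (x+a)) + (inverse (x+b) + inverse (x+a+b)) = 0"
    using H h1 h2 h3 h4 by (simp add: inv_swap_def ac_simps)
  then have "a / (x*(x+a)) = a / ((x+b)*(x+a+b))" using e1 e2 c2_eq[OF c2] by simp
  then have E: "x*(x+a) = (x+b)*(x+a+b)" using a0 h1 h2 h3 h4 by (simp add: field_simps)
  have "(x+b)*(x+a+b) = x*(x+a) + b*(a+b) + (b*x + b*x)" by (simp add: algebra_simps)
  then have "(x+b)*(x+a+b) = x*(x+a) + b*(a+b)" by (simp add: c2_self[OF c2])
  then have "b*(a+b) = 0" using E by simp
  moreover have "a + b \<noteq> 0" using ab c2_eq[OF c2] by simp
  ultimately show False using b0 by simp
qed

lemma c2_solve: assumes c2: "(1::'a::field)+1=0" shows "(x + y = z) = (x = z + (y::'a))"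
proof
  assume "x + y = z" then show "x = z + y" by (metis add.assoc add_0_right c2_self[OF c2])
next
  assume "x = z + y" then show "x + y = z" by (metis add.assoc add_0_right c2_self[OF c2])
qed

lemma count:
  fixes a b :: "'a::{field,finite}"
  assumes c2: "(1::'a)+1=0" and a0: "a \<noteq> 0" and b0: "b \<noteq> 0" and ab: "a \<noteq> b"
  shows "nabla inv_swap a b =
     (if inv_swap (a+b) + inv_swap a + inv_swap b + inv_swap 0 = 0 then 4 else 0) +
     (if inv_swap (1+a+b) + inv_swap (1+a) + inv_swap (1+b) + inv_swap 1 = 0 \<and> 1 \<notin> {0,a,b,a+b} then 4 else 0)"
proof -
  define V where "V = {0,a,b,a+b}"
  define g where "g = (\<lambda>x. inv_swap(x+a+b)+inv_swap(x+a)+inv_swap(x+b)+inv_swap x)"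
  note cs = c2_self[OF c2] c2_self2[OF c2]
  have inv: "g (x + v) = g x" if "v \<in> V" for x v
    using that unfolding V_def g_def by (auto simp: ac_simps cs)
  have clos: "v + w \<in> V" if "v \<in> V" "w \<in> V" for v w
    using that unfolding V_def by (auto simp: ac_simps cs)
  have abn: "a + b \<noteq> 0" using ab c2_eq[OF c2] by simp
  have abn2: "a + b \<noteq> a" "a + b \<noteq> b" using a0 b0 by (auto simp: add.commute)
  have cardV: "card V = 4" unfolding V_def using a0 b0 ab abn abn2 by (auto simp: card_insert_if)
  have injV: "inj_on (\<lambda>v. 1 + v) V" by (auto intro: inj_onI)
  have cardW: "card ((\<lambda>v. 1 + v) ` V) = 4" using card_image[OF injV] cardV by simp
  have gV: "g x = g 0" if "x \<in> V" for x using inv[of x 0] that by simp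
  have gW: "g (1 + v) = g 1" if "v \<in> V" for v using inv[of v 1] that by simp
  have Sset: "{x. g x = 0} = (if g 0 = 0 then V else {}) \<union> (if g 1 = 0 then (\<lambda>v. 1 + v) ` V else {})"
  proof (intro set_eqI iffI)
    fix x assume "x \<in> {x. g x = 0}"
    then have gx: "g x = 0" by simp
    show "x \<in> (if g 0 = 0 then V else {}) \<union> (if g 1 = 0 then (\<lambda>v. 1 + v) ` V else {})"
    proof (cases "x \<in> V")
      case True
      then have "g x = g 0" using inv[of x 0] by (metis add.left_neutral)
      then show ?thesis using gx True by simp
    next
      case xV: False
      show ?thesis
      proof (cases "x \<in> (\<lambda>v. 1 + v) ` V")
        case True
        then obtain v where v: "v \<in> V" "x = 1 + v" by auto
        then have "g x = g 1" using inv[of v 1] by (simp add: add.commute)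
        then show ?thesis using gx True by simp
      next
        case False
        have A: "x \<noteq> 0" "x \<noteq> a" "x \<noteq> b" "x \<noteq> a+b" using xV by (auto simp: V_def)
        have B0: "x \<noteq> 1 + v" if "v \<in> V" for v using False that by blast
        have B: "x \<noteq> 1" "x \<noteq> 1+a" "x \<noteq> 1+b" "x \<noteq> 1+(a+b)"
          using B0[of 0] B0[of a] B0[of b] B0[of "a+b"] by (simp_all add: V_def)
        have C: "x+a \<noteq> 0" "x+a \<noteq> 1" "x+b \<noteq> 0" "x+b \<noteq> 1" "x+a+b \<noteq> 0" "x+a+b \<noteq> 1"
          using A(2) c2_solve[OF c2, of x a 0] B(2) c2_solve[OF c2, of x a 1]
            A(3) c2_solve[OF c2, of x b 0] B(3) c2_solve[OF c2, of x b 1]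
            A(4) c2_solve[OF c2, of x "a+b" 0] B(4) c2_solve[OF c2, of x "a+b" 1]
          by (simp_all only: add.assoc add_0_left) blast+
        note D = A(1) B(1) C
        have "g x \<noteq> 0" unfolding g_def using key[OF c2 a0 b0 ab D] by simp
        then show ?thesis using gx by simp
      qed
    qed
  next
    fix x assume "x \<in> (if g 0 = 0 then V else {}) \<union> (if g 1 = 0 then (\<lambda>v. 1 + v) ` V else {})"
    then show "x \<in> {x. g x = 0}"
      using gV gW by (auto split: if_splits)
  qed
  have "nabla inv_swap a b = card {x. g x = 0}" unfolding nabla_def g_def by simp
  also have "\<dots> = (if g 0 = 0 then 4 else 0) + (if g 1 = 0 \<and> 1 \<notin> V then 4 else 0)"
  proof (cases "1 \<in> V")
    case True
    have sub: "(\<lambda>v. 1 + v) ` V \<subseteq> V" using clos True by auto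
    have "g 1 = g 0" using inv[OF True, of 0] by simp
    then have "{x. g x = 0} = (if g 0 = 0 then V else {})" using Sset sub
      by (cases "g 0 = 0") (simp_all add: Un_absorb2)
    then show ?thesis using True cardV by simp
  next
    case False
    have disj: "V \<inter> (\<lambda>v. 1 + v) ` V = {}"
    proof (rule ccontr)
      assume "V \<inter> (\<lambda>v. 1 + v) ` V \<noteq> {}"
      then obtain v w where "v \<in> V" "w \<in> V" "v = 1 + w" by auto
      then have vw: "v \<in> V" "w \<in> V" "v = 1 + w" by auto
      have "v + w = 1" using vw(3) by (simp add: add.assoc cs)
      moreover have "v + w \<in> V" using clos vw(1,2) by blast
      ultimately show False using False by simp
    qed
    have fin: "finite V" unfolding V_def by simp
    have finW: "finite ((\<lambda>v. 1 + v) ` V)" using fin by simp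
    show ?thesis using False
      by (cases "g 0 = 0"; cases "g 1 = 0") (simp_all add: Sset card_Un_disjoint[OF fin finW disj] cardV cardW)
  qed
  finally show ?thesis unfolding g_def V_def by simp
qed

lemma inv_mul: "(x::'a::field) \<noteq> 0 \<Longrightarrow> inverse x * (x * y) = y"
  by (simp add: mult.assoc[symmetric])

lemma G0:
  assumes c2: "(1::'a::field)+1=0" and h: "a \<noteq> 0" "a \<noteq> 1" "b \<noteq> 0" "b \<noteq> 1" "a+b \<noteq> 0" "a+b \<noteq> 1"
  shows "(inv_swap (a+b) + inv_swap a + inv_swap b + inv_swap 0 = 0) = (a^2+b^2+a*b = a*b*(a+(b::'a)))"
proof -
  let ?p = "a*b*(a+b)"
  let ?T = "inverse (a+b) + inverse a + inverse b + 1"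
  have p0: "?p \<noteq> 0" using h by simp
  have L: "inv_swap (a+b) + inv_swap a + inv_swap b + inv_swap 0 = ?T" using h by (simp add: inv_swap_def)
  have "?T * ?p = inverse (a+b) * ((a+b)*(a*b)) + inverse a * (a*(b*(a+b))) + inverse b * (b*(a*(a+b))) + ?p"
    by (simp add: algebra_simps)
  also have "\<dots> = a*b + b*(a+b) + a*(a+b) + ?p" by (simp only: inv_mul[OF h(5)] inv_mul[OF h(1)] inv_mul[OF h(3)])
  also have "a*b + b*(a+b) + a*(a+b) = (a^2+b^2+a*b) + (a*b + a*b)" by (simp add: algebra_simps power2_eq_square)
  finally have "?T * ?p = (a^2+b^2+a*b) + ?p" by (simp add: c2_self[OF c2])
  then show ?thesis using L p0 c2_eq[OF c2] by (metis mult_eq_0_iff)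
qed

lemma G1:
  assumes c2: "(1::'a::field)+1=0" and h: "a \<noteq> 0" "a \<noteq> 1" "b \<noteq> 0" "b \<noteq> 1" "a+b \<noteq> 0" "a+b \<noteq> 1"
  shows "(inv_swap (1+a+b) + inv_swap (1+a) + inv_swap (1+b) + inv_swap 1 = 0) = (a^2+b^2+a*b = (1::'a))"
proof -
  have n1: "1+a \<noteq> 0" "1+a \<noteq> 1" "1+b \<noteq> 0" "1+b \<noteq> 1" "1+a+b \<noteq> 0" "1+a+b \<noteq> 1"
    using h c2_eq[OF c2, of 1 a] c2_eq[OF c2, of 1 b] c2_eq[OF c2, of 1 "a+b"] by (auto simp: add.assoc)
  let ?r = "(1+a)*(1+b)*(1+a+b)"
  let ?T = "inverse (1+a+b) + inverse (1+a) + inverse (1+b)"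
  have r0: "?r \<noteq> 0" using n1 by simp
  have L: "inv_swap (1+a+b) + inv_swap (1+a) + inv_swap (1+b) + inv_swap 1 = ?T" using n1 by (simp add: inv_swap_def)
  have "?T * ?r = inverse (1+a+b) * ((1+a+b)*((1+a)*(1+b))) + inverse (1+a) * ((1+a)*((1+b)*(1+a+b)))
       + inverse (1+b) * ((1+b)*((1+a)*(1+a+b)))"
    by (simp add: algebra_simps)
  also have "\<dots> = (1+a)*(1+b) + (1+b)*(1+a+b) + (1+a)*(1+a+b)" by (simp only: inv_mul[OF n1(5)] inv_mul[OF n1(1)] inv_mul[OF n1(3)])
  also have "\<dots> = (1 + (a^2+b^2+a*b)) + ((1+2*a+2*b+a*b) + (1+2*a+2*b+a*b))" by (simp add: algebra_simps power2_eq_square)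
  finally have "?T * ?r = 1 + (a^2+b^2+a*b)" by (simp add: c2_self[OF c2])
  then show ?thesis using L r0 c2_eq[OF c2] by (metis mult_eq_0_iff)
qed

lemma Gu:
  assumes c2: "(1::'a::field)+1=0" and h: "u \<noteq> 0" "u \<noteq> (1::'a)"
  shows "(inverse (1+u) + inverse u + 1 = 0) = (u*(1+u) = 1)"
proof -
  have n: "1 + u \<noteq> 0" using h c2_eq[OF c2, of 1 u] by auto
  have "(inverse (1+u) + inverse u + 1) * (u*(1+u)) = inverse (1+u) * ((1+u)*u) + inverse u * (u*(1+u)) + u*(1+u)"
    by (simp add: algebra_simps)
  also have "\<dots> = u + (1+u) + u*(1+u)" by (simp only: inv_mul[OF n] inv_mul[OF h(1)])
  also have "\<dots> = 1 + u*(1+u) + (u+u)" by (simp add: algebra_simps)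
  finally have "(inverse (1+u) + inverse u + 1) * (u*(1+u)) = 1 + u*(1+u)" by (simp add: c2_self[OF c2])
  then show ?thesis using h n c2_eq[OF c2, of 1 "u*(1+u)"] by (metis mult_eq_0_iff eq_commute)
qed

lemma Gu2:
  assumes c2: "(1::'a::field)+1=0" and h: "u \<noteq> 0" "u \<noteq> (1::'a)"
  shows "inv_swap (1+u) = inverse (1+u)" "inv_swap u = inverse u" "inv_swap (u+1) = inverse (1+u)"
proof -
  have n: "1 + u \<noteq> 0" "1 + u \<noteq> 1" using h c2_eq[OF c2, of 1 u] by auto
  then show "inv_swap (1+u) = inverse (1+u)" "inv_swap u = inverse u" "inv_swap (u+1) = inverse (1+u)"
    using h by (simp_all add: inv_swap_def add.commute)
qed

lemma G2:
  assumes c2: "(1::'a::field)+1=0" and h: "a \<noteq> 0" "b \<noteq> 0" "a \<noteq> b" and one: "(1::'a) \<in> {0,a,b,a+b}"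
  shows "(inv_swap (a+b) + inv_swap a + inv_swap b + inv_swap 0 = 0) = (a*b*(a+b) = 1)"
proof -
  have i01: "inv_swap (0::'a) = 1" "inv_swap (1::'a) = 0" by (simp_all add: inv_swap_def)
  have "a = 1 \<or> b = 1 \<or> a + b = 1" using one by auto
  then show ?thesis
  proof (elim disjE)
    assume a1: "a = 1"
    then have b1: "b \<noteq> 1" using h by simp
    have "inv_swap (a+b) + inv_swap a + inv_swap b + inv_swap 0 = inverse (1+b) + inverse b + 1"
      using Gu2[OF c2 h(2) b1] a1 i01 by simp
    moreover have "a*b*(a+b) = b*(1+b)" using a1 by simp
    ultimately show ?thesis using Gu[OF c2 h(2) b1] by metis
  next
    assume b1: "b = 1"
    then have a1: "a \<noteq> 1" using h by simp
    have "inv_swap (a+b) + inv_swap a + inv_swap b + inv_swap 0 = inverse (1+a) + inverse a + 1"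
      using Gu2[OF c2 h(1) a1] b1 i01 by simp
    moreover have "a*b*(a+b) = a*(1+a)" using b1 by (simp add: add.commute)
    ultimately show ?thesis using Gu[OF c2 h(1) a1] by metis
  next
    assume s: "a + b = 1"
    then have bb: "b = 1 + a" using c2_solve[OF c2, of b a 1] by (simp add: add.commute)
    then have a1: "a \<noteq> 1" using h c2_self[OF c2] by auto
    have "inv_swap (a+b) + inv_swap a + inv_swap b + inv_swap 0 = inverse a + inverse (1+a) + 1"
    proof -
      have "inv_swap (a+b) = 0" using s i01 by simp
      moreover have "inv_swap b = inverse (1+a)" using bb Gu2[OF c2 h(1) a1] by simp
      ultimately show ?thesis using Gu2[OF c2 h(1) a1] i01 by simp
    qed
    moreover have "a*b*(a+b) = a*(1+a)" using s bb by simp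
    moreover have "inverse (1+a) + inverse a + 1 = inverse a + inverse (1+a) + 1" by (simp add: ac_simps)
    ultimately show ?thesis using Gu[OF c2 h(1) a1] by metis
  qed
qed

lemma I1: "(a::'a::comm_ring_1)*(a^2+b^2+a*b) = a^3 + a*b*(a+b)"
  by (simp add: algebra_simps power2_eq_square power3_eq_cube)
lemma I2: "(b::'a::comm_ring_1)*(a^2+b^2+a*b) = b^3 + a*b*(a+b)"
  by (simp add: algebra_simps power2_eq_square power3_eq_cube)
lemma I3: "((a::'a::comm_ring_1)+b)*(a^2+b^2+a*b) = a^3 + b^3 + (a*b*(a+b) + a*b*(a+b))"
  by (simp add: algebra_simps power2_eq_square power3_eq_cube)

lemma L3a:
  assumes c2: "(1::'a::field)+1=0" and h: "a \<noteq> 0" "b \<noteq> 0" "a \<noteq> b"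
    and ca: "a^3+a+1=0" and cb: "b^3+b+1=(0::'a)"
  shows "a^2+b^2+a*b = 1" "a*b*(a+b) = 1" "1 \<notin> {0,a,b,a+b}"
proof -
  note cs = c2_self[OF c2] c2_self2[OF c2]
  have abn: "a + b \<noteq> 0" using h c2_eq[OF c2] by simp
  have "(a+b)*((a^2+b^2+a*b)+1) + (1+1) = (a^3+a+1)+(b^3+b+1) + (a*b*(a+b) + a*b*(a+b))"
    by (simp add: algebra_simps power2_eq_square power3_eq_cube)
  then have "(a+b)*((a^2+b^2+a*b)+1) = 0" using ca cb by (simp add: cs)
  then have "(a^2+b^2+a*b)+1 = 0" using abn by simp
  then show q: "a^2+b^2+a*b = 1" using c2_eq[OF c2] by blast
  have a3: "a^3 = a + 1" using ca c2_eq[OF c2, of "a^3" "a+1"] by (simp add: add.assoc)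
  have "a = (a + 1) + a*b*(a+b)" using I1[of a b] q a3 by simp
  then have "a + (a + (1 + a*b*(a+b))) = a + a" by (simp add: add.assoc)
  then show p: "a*b*(a+b) = 1" using c2_eq[OF c2, of 1 "a*b*(a+b)"] by (simp only: cs)
  have a1: "a \<noteq> 1" using ca c2 by (auto simp: add.assoc)
  have b1: "b \<noteq> 1" using cb c2 by (auto simp: add.assoc)
  have "a + b \<noteq> 1"
  proof
    assume s: "a + b = 1"
    then have "a*b = 1" using p by simp
    moreover have "(a^2+b^2+a*b) + (a*b + a*b) = (a+b)^2 + a*b" by (simp add: algebra_simps power2_eq_square)
    ultimately have "1 + 0 = 1 + (1::'a)" using q s by (simp add: cs)
    then show False using c2 by simp
  qed
  then show "1 \<notin> {0,a,b,a+b}" using a1 b1 by auto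
qed

lemma L3b:
  assumes c2: "(1::'a::field)+1=0" and q: "a^2+b^2+a*b = 1" and p: "a*b*(a+b) = (1::'a)"
  shows "a^3+a+1=0" "b^3+b+1=0"
proof -
  note cs = c2_self[OF c2] c2_self2[OF c2]
  have e: "a = a^3 + 1" using I1[of a b] unfolding q p by simp
  have "a^3+a+1 = a^3 + (a^3 + 1) + 1" using e by metis
  then have "a^3+a+1 = a^3 + (a^3 + (1 + 1))" by (simp add: add.assoc)
  then show "a^3+a+1=0" by (simp only: cs)
  have e: "b = b^3 + 1" using I2[where a=a and b=b] unfolding q p by simp
  have "b^3+b+1 = b^3 + (b^3 + 1) + 1" using e by metis
  then have "b^3+b+1 = b^3 + (b^3 + (1 + 1))" by (simp add: add.assoc)
  then show "b^3+b+1=0" by (simp only: cs)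
qed

lemma L4:
  assumes c2: "(1::'a::field)+1=0" and one: "(1::'a) \<in> {0,a,b,a+b}" and h: "a \<noteq> 0" "b \<noteq> 0"
  shows "a^2+b^2+a*b = 1 + a*b*(a+b)"
proof -
  note cs = c2_self[OF c2] c2_self2[OF c2]
  have "a = 1 \<or> b = 1 \<or> a + b = 1" using one h by auto
  then show ?thesis
  proof (elim disjE)
    assume "a = 1" then show ?thesis by (simp add: algebra_simps power2_eq_square)
  next
    assume "b = 1" then show ?thesis by (simp add: algebra_simps power2_eq_square)
  next
    assume s: "a + b = 1"
    have "(a^2+b^2+a*b) + (a*b + a*b) = (a+b)^2 + a*b" by (simp add: algebra_simps power2_eq_square)
    then show ?thesis using s by (simp add: cs)
  qed
qed

lemma cube1:
  assumes c2: "(1::'a::field)+1=0" and a3: "a^3 = 1" and a1: "a \<noteq> (1::'a)"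
  shows "a^2+a+1 = 0"
proof -
  note cs = c2_self[OF c2] c2_self2[OF c2]
  have "(a+1)*(a^2+a+1) = (a^3 + 1) + ((a^2+a) + (a^2+a))" by (simp add: algebra_simps power2_eq_square power3_eq_cube)
  then have "(a+1)*(a^2+a+1) = 0" using a3 by (simp add: cs)
  moreover have "a + 1 \<noteq> 0" using a1 c2_eq[OF c2] by simp
  ultimately show ?thesis by simp
qed

lemma L5:
  assumes c2: "(1::'a::field)+1=0" and h: "a \<noteq> 0" "b \<noteq> 0" "a \<noteq> b"
    and a4: "a^4 = a" and b4: "b^4 = (b::'a)"
  shows "a*b*(a+b) = 1" "1 \<in> {0,a,b,a+b}"
proof -
  note cs = c2_self[OF c2] c2_self2[OF c2]
  have abn: "a + b \<noteq> 0" using h c2_eq[OF c2] by simp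
  have "a * a^3 = a * 1" using a4 by (simp add: eval_nat_numeral)
  then have a3: "a^3 = 1" using h(1) mult_left_cancel by blast
  have "b * b^3 = b * 1" using b4 by (simp add: eval_nat_numeral)
  then have b3: "b^3 = 1" using h(2) mult_left_cancel by blast
  have "(a+b)*(a^2+b^2+a*b) = 0" using I3[of a b] a3 b3 by (simp add: cs)
  then have q: "a^2+b^2+a*b = 0" using abn by simp
  then have "0 = 1 + a*b*(a+b)" using I1[of a b] a3 by simp
  then show "a*b*(a+b) = 1" using c2_eq[OF c2, of 1 "a*b*(a+b)"] by simp
  show "1 \<in> {0,a,b,a+b}"
  proof (cases "a = 1 \<or> b = 1")
    case True then show ?thesis by auto
  next
    case False
    then have qa: "a^2+a+1 = 0" and qb: "b^2+b+1 = 0" using cube1[OF c2 a3] cube1[OF c2 b3] by auto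
    have "(a+b)*(a+b+1) + (1+1) = (a^2+a+1)+(b^2+b+1) + (a*b+a*b)" by (simp add: algebra_simps power2_eq_square)
    then have "(a+b)*(a+b+1) = 0" using qa qb by (simp add: cs)
    then have "a+b+1 = 0" using abn by simp
    then have "a+b = 1" using c2_eq[OF c2] by blast
    then show ?thesis by simp
  qed
qed

lemma L6:
  assumes c2: "(1::'a::field)+1=0" and h: "a \<noteq> 0" "b \<noteq> 0" "a \<noteq> b"
    and one: "(1::'a) \<in> {0,a,b,a+b}" and p: "a*b*(a+b) = 1"
  shows "a^4 = a" "b^4 = b" "\<exists>u. u^2+u+1 = (0::'a)"
proof -
  note cs = c2_self[OF c2] c2_self2[OF c2]
  have q: "a^2+b^2+a*b = 0" using L4[OF c2 one h(1,2)] p cs by simp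
  have "0 = a^3 + 1" using I1[of a b] unfolding q p by simp
  then have a3: "a^3 = 1" using c2_eq[OF c2, of "a^3" 1] by simp
  have "0 = b^3 + 1" using I2[where a=a and b=b] unfolding q p by simp
  then have b3: "b^3 = 1" using c2_eq[OF c2, of "b^3" 1] by simp
  have "a^4 = a * a^3" by (simp add: eval_nat_numeral)
  then show "a^4 = a" using a3 by simp
  have "b^4 = b * b^3" by (simp add: eval_nat_numeral)
  then show "b^4 = b" using b3 by simp
  show "\<exists>u. u^2+u+1 = (0::'a)"
  proof (cases "a = 1")
    case True
    then have "b \<noteq> 1" using h by simp
    then show ?thesis using cube1[OF c2 b3] by blast
  next
    case False
    then show ?thesis using cube1[OF c2 a3] by blast
  qed
qed

theorem theorem3p1:
  fixes n :: nat and a b :: "'a::{field,finite}"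
  assumes "n > 0" and "card (UNIV :: 'a set) = 2 ^ n"
  shows "nabla (inv_swap :: 'a \<Rightarrow> 'a) a b =
    (if a * b * (a + b) = 0 then 2 ^ n
     else if a \<noteq> b \<and> a^3 + a + 1 = 0 \<and> b^3 + b + 1 = 0 then 8
     else if a * b * (a + b) \<noteq> 0 \<and>
             ((a \<in> subfield_star n 2 \<and> b \<in> subfield_star n 2) \<or> (a, b) \<in> S_set n) then 4
     else 0)"
proof -
  have c2: "(1::'a)+1 = 0" using char2[OF assms(2) assms(1)] .
  note cs = c2_self[OF c2] c2_self2[OF c2]
  show ?thesis
  proof (cases "a*b*(a+b) = 0")
    case True
    have "a = 0 \<or> b = 0 \<or> a = b" using True c2_eq[OF c2] by auto
    then have "\<forall>x. inv_swap (x+a+b) + inv_swap (x+a) + inv_swap (x+b) + inv_swap x = (0::'a)"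
      by (auto simp: ac_simps cs)
    then have "nabla (inv_swap :: 'a \<Rightarrow> 'a) a b = card (UNIV :: 'a set)" unfolding nabla_def by simp
    then show ?thesis using True assms(2) by simp
  next
    case False
    then have h: "a \<noteq> 0" "b \<noteq> 0" "a + b \<noteq> 0" by auto
    then have hab: "a \<noteq> b" using c2_eq[OF c2] by blast
    note N = count[OF c2 h(1,2) hab]
    have Sdef: "(a,b) \<in> S_set n \<longleftrightarrow> (a^2+b^2+a*b = 1 \<or> a^2+b^2+a*b = a*b*(a+b)) \<and>
        \<not> (a \<in> subfield_star n 3 \<and> b \<in> subfield_star n 3 \<and> a^3+a+1=0 \<and> b^3+b+1=0)"
      using h unfolding S_set_def by auto
    have F4: "(a \<in> subfield_star n 2 \<and> b \<in> subfield_star n 2) \<longleftrightarrow> (2 dvd n \<and> a^4 = a \<and> b^4 = b)"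
      using h unfolding subfield_star_def by auto
    show ?thesis
    proof (cases "(1::'a) \<in> {0,a,b,a+b}")
      case True
      have g0: "(inv_swap (a+b) + inv_swap a + inv_swap b + inv_swap 0 = 0) = (a*b*(a+b) = 1)"
        using G2[OF c2 h(1,2) hab True] .
      have not8: "\<not> (a^3 + a + 1 = 0 \<and> b^3 + b + 1 = 0)"
        using L3a(3)[OF c2 h(1,2) hab] True by blast
      have q: "a^2+b^2+a*b = 1 + a*b*(a+b)" using L4[OF c2 True h(1,2)] .
      have notS: "(a,b) \<notin> S_set n"
      proof
        assume "(a,b) \<in> S_set n"
        then have "a^2+b^2+a*b = 1 \<or> a^2+b^2+a*b = a*b*(a+b)" using Sdef by blast
        then show False
        proof
          assume "a^2+b^2+a*b = 1"
          then have "1 + a*b*(a+b) = 1 + 0" using q by simp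
          then show False using False by simp
        next
          assume "a^2+b^2+a*b = a*b*(a+b)"
          then have "1 + a*b*(a+b) = 0 + a*b*(a+b)" using q by simp
          then show False by simp
        qed
      qed
      have F4iff: "(a \<in> subfield_star n 2 \<and> b \<in> subfield_star n 2) \<longleftrightarrow> a*b*(a+b) = 1"
      proof
        assume "a \<in> subfield_star n 2 \<and> b \<in> subfield_star n 2"
        then show "a*b*(a+b) = 1" using F4 L5(1)[OF c2 h(1,2) hab] by blast
      next
        assume p: "a*b*(a+b) = 1"
        obtain u where "u^2+u+1 = (0::'a)" using L6(3)[OF c2 h(1,2) hab True p] by blast
        then have "2 dvd n" using even_n[OF assms(2) assms(1)] by blast
        then show "a \<in> subfield_star n 2 \<and> b \<in> subfield_star n 2"
          using F4 L6(1,2)[OF c2 h(1,2) hab True p] by blast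
      qed
      show ?thesis using N True g0 not8 notS F4iff False by simp
    next
      case nV: False
      have h1: "a \<noteq> 1" "b \<noteq> 1" "a + b \<noteq> 1" using nV by auto
      have g0: "(inv_swap (a+b) + inv_swap a + inv_swap b + inv_swap 0 = 0) = (a^2+b^2+a*b = a*b*(a+(b::'a)))"
        using G0[OF c2 h(1) h1(1) h(2) h1(2) h(3) h1(3)] .
      have g1: "(inv_swap (1+a+b) + inv_swap (1+a) + inv_swap (1+b) + inv_swap 1 = 0) = (a^2+b^2+a*b = (1::'a))"
        using G1[OF c2 h(1) h1(1) h(2) h1(2) h(3) h1(3)] .
      have c8: "(a^3 + a + 1 = 0 \<and> b^3 + b + 1 = 0) \<longleftrightarrow> (a^2+b^2+a*b = 1 \<and> a*b*(a+b) = 1)"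
        using L3a(1,2)[OF c2 h(1,2) hab] L3b[OF c2] by blast
      have notF4: "\<not> (a \<in> subfield_star n 2 \<and> b \<in> subfield_star n 2)"
        using F4 L5(2)[OF c2 h(1,2) hab] nV by blast
      show ?thesis
      proof (cases "a^2+b^2+a*b = 1 \<and> a*b*(a+b) = 1")
        case True
        then show ?thesis using N nV g0 g1 c8 hab False by simp
      next
        case n8: False
        have Siff: "(a,b) \<in> S_set n \<longleftrightarrow> (a^2+b^2+a*b = 1 \<or> a^2+b^2+a*b = a*b*(a+b))"
          using Sdef c8 n8 by blast
        show ?thesis using N nV g0 g1 c8 n8 Siff notF4 False by auto
      qed
    qed
  qed
qed

end
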